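(* Let $G$ be a finite directed graph and $R\subseteq V(G)$. Then $\mathrm{DT}_R(G)$ is shellable.
   Context: A directed forest in $G$ is a set of edges of $G$ which, viewed as a graph on $V(G)$, is acyclic and has at most one edge directed to each vertex; its roots are the vertices of $V(G)$ with no edge of the forest directed to them. $\mathrm{DT}(G)$ is the simplicial complex with vertex set $E(G)$ whose simplices are the directed forests. $\mathrm{DT}_R(G)\subseteq \mathrm{DT}(G)$ is the subcomplex generated by the faces of $\mathrm{DT}(G)$ that are edge sets of directed forests with root set exactly $R$. A simplicial complex $\Delta$ is shellable if its maximal faces can be ordered $F_1,\dots,F_n$ such that for all $1\le i<k\le n$ there exist $1\le j<k$ and $e\in F_k$ with $F_i\cap F_k\subseteq F_j\cap F_k=F_k\setminus\{e\}$. *)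

theory Defs
  imports Main
begin

text \<open>An undirected cycle in an edge set F (edges viewed as undirected,
parallel/antiparallel edges and loops allowed): distinct edges e_0..e_{k-1},
k \<ge> 1, joining a closed walk v_0 .. v_k = v_0 with v_0..v_{k-1} distinct.\<close>
definition has_undirected_cycle :: "('v \<times> 'v) set \<Rightarrow> bool" where
  "has_undirected_cycle F \<longleftrightarrow>
     (\<exists>es vs. length es \<ge> 1 \<and> length vs = length es + 1 \<and> distinct es \<and>
        set es \<subseteq> F \<and> hd vs = last vs \<and> distinct (tl vs) \<and>
        (\<forall>i < length es. es ! i = (vs ! i, vs ! Suc i) \<or> es ! i = (vs ! Suc i, vs ! i)))"

definition directed_forest :: "'v set \<Rightarrow> ('v \<times> 'v) set \<Rightarrow> ('v \<times> 'v) set \<Rightarrow> bool" where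
  "directed_forest V E F \<longleftrightarrow> F \<subseteq> E \<and> \<not> has_undirected_cycle F \<and>
     (\<forall>v \<in> V. card {u. (u, v) \<in> F} \<le> 1)"

definition forest_roots :: "'v set \<Rightarrow> ('v \<times> 'v) set \<Rightarrow> 'v set" where
  "forest_roots V F = {v \<in> V. \<forall>u. (u, v) \<notin> F}"

definition DT_R :: "'v set \<Rightarrow> ('v \<times> 'v) set \<Rightarrow> 'v set \<Rightarrow> ('v \<times> 'v) set set" where
  "DT_R V E R = {S. \<exists>F. directed_forest V E F \<and> forest_roots V F = R \<and> S \<subseteq> F}"

definition facets :: "'a set set \<Rightarrow> 'a set set" where
  "facets \<Delta> = {F \<in> \<Delta>. \<forall>G \<in> \<Delta>. F \<subseteq> G \<longrightarrow> G = F}"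

definition shellable :: "'a set set \<Rightarrow> bool" where
  "shellable \<Delta> \<longleftrightarrow> (\<exists>Fs. distinct Fs \<and> set Fs = facets \<Delta> \<and>
     (\<forall>i k. i < k \<and> k < length Fs \<longrightarrow>
        (\<exists>j < k. \<exists>e \<in> Fs ! k. Fs ! i \<inter> Fs ! k \<subseteq> Fs ! j \<inter> Fs ! k \<and>
                              Fs ! j \<inter> Fs ! k = Fs ! k - {e})))"

end

theory Submission
  imports Defs
begin


lemma shellable_from_key:
  fixes key :: "'a set \<Rightarrow> nat"
  assumes fin: "finite (facets \<Delta>)" and inj: "inj_on key (facets \<Delta>)"
    and step: "\<And>F F'. F \<in> facets \<Delta> \<Longrightarrow> F' \<in> facets \<Delta> \<Longrightarrow> key F' < key F \<Longrightarrow>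
       \<exists>G\<in>facets \<Delta>. key G < key F \<and> (\<exists>e\<in>F. F' \<inter> F \<subseteq> G \<inter> F \<and> G \<inter> F = F - {e})"
  shows "shellable \<Delta>"
proof -
  define FF where "FF = facets \<Delta>"
  define ks where "ks = sorted_list_of_set (key ` FF)"
  define g where "g = the_inv_into FF key"
  define Fs where "Fs = map g ks"
  have finK: "finite (key ` FF)" using fin FF_def by simp
  have setks: "set ks = key ` FF" using finK ks_def by simp
  have sks: "sorted_wrt (<) ks" unfolding ks_def by simp
  have dks: "distinct ks" unfolding ks_def by simp
  have gk: "\<And>F. F \<in> FF \<Longrightarrow> g (key F) = F" unfolding g_def using inj FF_def
    by (simp add: the_inv_into_f_f)
  have kg: "\<And>c. c \<in> key ` FF \<Longrightarrow> key (g c) = c \<and> g c \<in> FF" using gk by auto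
  have len: "length Fs = length ks" unfolding Fs_def by simp
  have Fsg: "\<And>i. i < length ks \<Longrightarrow> Fs ! i = g (ks ! i)" unfolding Fs_def by simp
  have Fsn: "\<And>i. i < length ks \<Longrightarrow> key (Fs ! i) = ks ! i \<and> Fs ! i \<in> FF"
  proof -
    fix i assume i: "i < length ks"
    then have "ks ! i \<in> key ` FF" using setks nth_mem by metis
    then show "key (Fs ! i) = ks ! i \<and> Fs ! i \<in> FF" using kg Fsg[OF i] by simp
  qed
  show ?thesis unfolding shellable_def
  proof (rule exI[of _ Fs], intro conjI allI impI)
    have "inj_on g (set ks)"
    proof (rule inj_onI)
      fix a b assume a: "a \<in> set ks" and b: "b \<in> set ks" and ab: "g a = g b"
      then have "key (g a) = key (g b)" by simp
      then show "a = b" using kg a b setks by simp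
    qed
    then show "distinct Fs" unfolding Fs_def using dks by (simp add: distinct_map)
    have "set Fs = (\<lambda>F. g (key F)) ` FF" unfolding Fs_def using setks by (simp add: image_image)
    also have "\<dots> = FF" using gk by simp
    finally show "set Fs = facets \<Delta>" using FF_def by simp
    fix i k assume ik: "i < k \<and> k < length Fs"
    then have "ks ! i < ks ! k" using sorted_wrt_nth_less[OF sks] len by simp
    moreover have "key (Fs ! i) = ks ! i" using Fsn[of i] ik len by auto
    moreover have "key (Fs ! k) = ks ! k" using Fsn[of k] ik len by auto
    ultimately have kl: "key (Fs ! i) < key (Fs ! k)" by simp
    obtain G e where G: "G \<in> FF" "key G < key (Fs ! k)" "e \<in> Fs ! k"
      "Fs ! i \<inter> Fs ! k \<subseteq> G \<inter> Fs ! k" "G \<inter> Fs ! k = Fs ! k - {e}"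
    proof -
      have "Fs ! k \<in> FF" "Fs ! i \<in> FF" using Fsn ik len by auto
      then show ?thesis using step[OF _ _ kl] FF_def that by blast
    qed
    obtain j where j: "j < length ks" "ks ! j = key G" using G(1) setks by (metis imageI in_set_conv_nth)
    have "j < k"
    proof (rule ccontr)
      assume "\<not> j < k"
      then have "ks ! k \<le> ks ! j" using sorted_nth_mono[of ks k j] sks j ik len
        by (simp add: strict_sorted_iff)
      then show False using G(2) j Fsn ik len by simp
    qed
    moreover have "Fs ! j = G" using Fsg[OF j(1)] j gk G(1) by simp
    ultimately show "\<exists>j<k. \<exists>e\<in>Fs ! k. Fs ! i \<inter> Fs ! k \<subseteq> Fs ! j \<inter> Fs ! k \<and> Fs ! j \<inter> Fs ! k = Fs ! k - {e}"
      using G by blast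
  qed
qed


definition par :: "('v \<times> 'v) set \<Rightarrow> 'v \<Rightarrow> 'v" where
  "par F v = (THE u. (u, v) \<in> F)"

definition pstruct :: "'v set \<Rightarrow> 'v set \<Rightarrow> ('v \<times> 'v) set \<Rightarrow> bool" where
  "pstruct V R F \<longleftrightarrow> F \<subseteq> V \<times> V \<and> (\<forall>v\<in>V - R. \<exists>!u. (u, v) \<in> F) \<and> (\<forall>v\<in>R. \<forall>u. (u, v) \<notin> F)"

definition reach_all :: "'v set \<Rightarrow> 'v set \<Rightarrow> ('v \<times> 'v) set \<Rightarrow> bool" where
  "reach_all V R F \<longleftrightarrow> (\<forall>v\<in>V. \<exists>n. (par F ^^ n) v \<in> R)"

definition dep :: "'v set \<Rightarrow> ('v \<times> 'v) set \<Rightarrow> 'v \<Rightarrow> nat" where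
  "dep R F v = (LEAST n. (par F ^^ n) v \<in> R)"

lemma par_in:
  assumes "pstruct V R F" "v \<in> V" "v \<notin> R"
  shows "(par F v, v) \<in> F"
proof -
  have "\<exists>!u. (u, v) \<in> F" using assms unfolding pstruct_def by blast
  then show ?thesis unfolding par_def by (rule theI')
qed

lemma par_eq:
  assumes "pstruct V R F" "(u, v) \<in> F"
  shows "par F v = u"
proof -
  have "v \<in> V" "v \<notin> R" using assms unfolding pstruct_def by blast+
  then have "\<exists>!u. (u, v) \<in> F" using assms unfolding pstruct_def by blast
  then show ?thesis unfolding par_def using assms(2) by (rule the1_equality)
qed

lemma par_V:
  assumes "pstruct V R F" "v \<in> V" "v \<notin> R"
  shows "par F v \<in> V"
  using par_in[OF assms] assms(1) unfolding pstruct_def by blast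

lemma not_in_R:
  assumes "pstruct V R F" "(u, v) \<in> F"
  shows "v \<notin> R" "v \<in> V" "u \<in> V"
  using assms unfolding pstruct_def by blast+

lemma dep_R: "v \<in> R \<Longrightarrow> dep R F v = 0"
  unfolding dep_def by simp

lemma dep_step:
  assumes "pstruct V R F" "reach_all V R F" "v \<in> V" "v \<notin> R"
  shows "dep R F v = Suc (dep R F (par F v))"
proof -
  obtain n where n: "(par F ^^ n) v \<in> R" using assms unfolding reach_all_def by blast
  have "(LEAST n. (par F ^^ n) v \<in> R) = Suc (LEAST m. (par F ^^ Suc m) v \<in> R)"
    by (rule Least_Suc[where P="\<lambda>n. (par F ^^ n) v \<in> R", OF n]) (use assms(4) in simp)
  moreover have "\<And>m. (par F ^^ Suc m) v = (par F ^^ m) (par F v)"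
    by (simp add: funpow_Suc_right del: funpow.simps)
  ultimately show ?thesis unfolding dep_def by simp
qed

lemma dep_edge:
  assumes "pstruct V R F" "reach_all V R F" "(u, v) \<in> F"
  shows "dep R F u < dep R F v"
  using dep_step[OF assms(1,2) not_in_R(2,1)[OF assms(1,3)]] par_eq[OF assms(1,3)] by simp

lemma height_acyclic:
  fixes h :: "'v \<Rightarrow> nat"
  assumes h: "\<And>u v. (u, v) \<in> F \<Longrightarrow> h u < h v"
    and uq: "\<And>u u' v. (u, v) \<in> F \<Longrightarrow> (u', v) \<in> F \<Longrightarrow> u = u'"
  shows "\<not> has_undirected_cycle F"
proof
  assume "has_undirected_cycle F"
  then obtain es vs where k1: "length es \<ge> 1" and lv: "length vs = length es + 1"
    and des: "distinct es" and sub: "set es \<subseteq> F" and hl: "hd vs = last vs"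
    and ed: "\<forall>i < length es. es ! i = (vs ! i, vs ! Suc i) \<or> es ! i = (vs ! Suc i, vs ! i)"
    unfolding has_undirected_cycle_def by blast
  define k where "k = length es"
  have v0k: "vs ! 0 = vs ! k"
  proof -
    have "vs \<noteq> []" using lv by auto
    then have "hd vs = vs ! 0" "last vs = vs ! (length vs - 1)" by (simp_all add: hd_conv_nth last_conv_nth)
    then show ?thesis using hl lv k_def by simp
  qed
  have esF: "\<And>i. i < k \<Longrightarrow> es ! i \<in> F" using sub k_def by (metis nth_mem subsetD)
  define H where "H = (\<lambda>t. h (vs ! t))"
  define M where "M = Max (H ` {1..k})"
  have ne: "{1..k} \<noteq> {}" using k1 k_def by simp
  have "M \<in> H ` {1..k}" unfolding M_def using ne by (intro Max_in) auto
  then obtain m where m: "m \<in> {1..k}" "H m = M" by blast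
  have Hle1: "\<And>t. t \<in> {1..k} \<Longrightarrow> H t \<le> H m" using m M_def by simp
  have Hle: "\<And>t. t \<le> k \<Longrightarrow> H t \<le> H m"
  proof -
    fix t assume "t \<le> k"
    show "H t \<le> H m"
    proof (cases "t = 0")
      case True
      then show ?thesis using Hle1[of k] k1 k_def v0k H_def by simp
    next
      case False
      then show ?thesis using Hle1 \<open>t \<le> k\<close> by simp
    qed
  qed
  have e1: "es ! (m - 1) = (vs ! (m - 1), vs ! m)"
  proof -
    have "m - 1 < k" "Suc (m - 1) = m" using m by auto
    then have c: "es ! (m - 1) = (vs ! (m - 1), vs ! m) \<or> es ! (m - 1) = (vs ! m, vs ! (m - 1))"
      using ed k_def by metis
    have "m - 1 \<le> k" using m by auto
    then have "\<not> H m < H (m - 1)" using Hle[of "m - 1"] by linarith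
    then have "es ! (m - 1) \<noteq> (vs ! m, vs ! (m - 1))" using h esF[of "m - 1"] m H_def by auto
    then show ?thesis using c by blast
  qed
  define s where "s = (if m < k then m else 0)"
  have sk: "s < k" using s_def m k1 k_def by auto
  have vsm: "vs ! s = vs ! m" using s_def v0k m by auto
  have e2: "es ! s = (vs ! Suc s, vs ! m)"
  proof -
    have c: "es ! s = (vs ! s, vs ! Suc s) \<or> es ! s = (vs ! Suc s, vs ! s)"
      using ed k_def sk by metis
    have "Suc s \<le> k" using sk by simp
    then have "\<not> H m < H (Suc s)" using Hle[of "Suc s"] by auto
    then have "es ! s \<noteq> (vs ! s, vs ! Suc s)" using h esF[OF sk] vsm H_def by auto
    then show ?thesis using c vsm by auto
  qed
  have "m - 1 < k" using m by auto
  then have "(vs ! (m - 1), vs ! m) \<in> F" "(vs ! Suc s, vs ! m) \<in> F" using esF[of "m - 1"] esF[OF sk] e1 e2 by auto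
  then have "vs ! (m - 1) = vs ! Suc s" using uq by blast
  then have "es ! (m - 1) = es ! s" using e1 e2 by simp
  moreover have "m - 1 < length es" "s < length es" using m sk k_def by auto
  ultimately have "m - 1 = s" using des nth_eq_iff_index_eq by blast
  then have "m = k" "k = 1" using s_def m by (auto split: if_splits)
  then have "es ! 0 = (vs ! 0, vs ! 0)" using e1 v0k by simp
  then show False using h esF[of 0] k1 k_def by fastforce
qed



lemma fp: "(f ^^ m) ((f ^^ n) x) = (f ^^ (m + n)) x"
  by (simp add: funpow_add)

lemma funpow_in_V:
  assumes "pstruct V R F" "v \<in> V" "\<forall>n. (par F ^^ n) v \<notin> R"
  shows "(par F ^^ n) v \<in> V"
proof (induction n)
  case 0 then show ?case using assms by simp
next
  case (Suc n)
  then show ?case using par_V[OF assms(1) Suc] assms(3) by simp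
qed

lemma reach_from_acyclic:
  assumes ps: "pstruct V R F" and fin: "finite V" and ac: "\<not> has_undirected_cycle F" and v: "v \<in> V"
  shows "\<exists>n. (par F ^^ n) v \<in> R"
proof (rule ccontr)
  assume nr: "\<nexists>n. (par F ^^ n) v \<in> R"
  define p where "p = par F"
  have inV: "\<And>n. (p ^^ n) v \<in> V" using funpow_in_V[OF ps v] nr p_def by blast
  have notR: "\<And>n. (p ^^ n) v \<notin> R" using nr p_def by blast
  have "\<not> inj_on (\<lambda>n. (p ^^ n) v) {0..card V}"
  proof
    assume "inj_on (\<lambda>n. (p ^^ n) v) {0..card V}"
    then have "card {0..card V} \<le> card V" using card_inj_on_le[of _ "{0..card V}" V] inV fin by blast
    then show False by simp
  qed
  then obtain a b where ab: "a < b" "(p ^^ a) v = (p ^^ b) v"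
    unfolding inj_on_def by (metis linorder_neqE_nat)
  define x where "x = (p ^^ a) v"
  have xV: "\<And>n. (p ^^ n) x \<in> V" "\<And>n. (p ^^ n) x \<notin> R"
    using inV notR x_def by (simp_all add: fp)
  have cyc0: "(p ^^ (b - a)) x = x"
    using ab x_def by (metis funpow_add le_add_diff_inverse2 less_imp_le comp_apply)
  define c where "c = (LEAST c. 0 < c \<and> (p ^^ c) x = x)"
  have cP: "0 < c \<and> (p ^^ c) x = x" unfolding c_def
    by (rule LeastI[of _ "b - a"]) (use ab cyc0 in simp)
  have cmin: "\<And>d. 0 < d \<Longrightarrow> d < c \<Longrightarrow> (p ^^ d) x \<noteq> x"
    using not_less_Least c_def by blast
  have dist: "\<And>s t. s < t \<Longrightarrow> t - s < c \<Longrightarrow> s \<le> c \<Longrightarrow> (p ^^ s) x \<noteq> (p ^^ t) x"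
  proof
    fix s t assume st: "s < t" "t - s < c" "s \<le> c" and eq: "(p ^^ s) x = (p ^^ t) x"
    define y where "y = (p ^^ s) x"
    have yy: "(p ^^ (t - s)) y = y" using eq st y_def
      by (metis funpow_add le_add_diff_inverse2 less_imp_le comp_apply)
    have xy: "x = (p ^^ (c - s)) y" using cP st y_def
      by (metis funpow_add le_add_diff_inverse2 comp_apply)
    have "(p ^^ (t - s)) x = (p ^^ (t - s)) ((p ^^ (c - s)) y)" using xy by simp
    also have "\<dots> = (p ^^ (c - s)) ((p ^^ (t - s)) y)"
      by (metis add.commute comp_apply funpow_add)
    also have "\<dots> = x" using yy xy by simp
    finally show False using cmin[of "t - s"] st by simp
  qed
  have edge: "\<And>t. ((p ^^ Suc t) x, (p ^^ t) x) \<in> F"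
    using par_in[OF ps xV(1) xV(2)] p_def by simp
  define vs where "vs = map (\<lambda>t. (p ^^ t) x) [0..<Suc c]"
  define es where "es = map (\<lambda>t. ((p ^^ Suc t) x, (p ^^ t) x)) [0..<c]"
  have "has_undirected_cycle F"
    unfolding has_undirected_cycle_def
  proof (intro exI conjI allI impI)
    show "1 \<le> length es" using cP es_def by simp
    show "length vs = length es + 1" using vs_def es_def by simp
    show "set es \<subseteq> F" using edge es_def by auto
    show "hd vs = last vs" using vs_def cP by (simp add: hd_map last_map)
    show "distinct (tl vs)"
    proof -
      have "tl vs = map (\<lambda>t. (p ^^ t) x) [1..<Suc c]" unfolding vs_def
        by (simp add: map_tl[symmetric] tl_upt)
      moreover have "inj_on (\<lambda>t. (p ^^ t) x) {1..<Suc c}"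
      proof (rule inj_onI)
        fix s t assume "s \<in> {1..<Suc c}" "t \<in> {1..<Suc c}" "(p ^^ s) x = (p ^^ t) x"
        then show "s = t" using dist[of s t] dist[of t s]
          by (metis atLeastLessThan_iff diff_less less_Suc_eq_le less_le_trans linorder_neqE_nat
               zero_less_one less_imp_diff_less)
      qed
      ultimately show ?thesis by (simp add: distinct_map del: upt_Suc)
    qed
    show "distinct es"
    proof -
      have "inj_on (\<lambda>t. ((p ^^ Suc t) x, (p ^^ t) x)) {0..<c}"
      proof (rule inj_onI)
        fix s t assume "s \<in> {0..<c}" "t \<in> {0..<c}" "((p ^^ Suc s) x, (p ^^ s) x) = ((p ^^ Suc t) x, (p ^^ t) x)"
        then show "s = t" using dist[of s t] dist[of t s]
          by (metis Pair_inject atLeastLessThan_iff less_imp_diff_less less_imp_le_nat linorder_neqE_nat)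
      qed
      then show ?thesis unfolding es_def by (simp add: distinct_map del: upt_Suc)
    qed
    fix i assume "i < length es"
    then have "i < c" using es_def by simp
    then have "es ! i = (vs ! Suc i, vs ! i)" unfolding es_def vs_def
      by (simp del: upt_Suc add: nth_map_upt)
    then show "es ! i = (vs ! i, vs ! Suc i) \<or> es ! i = (vs ! Suc i, vs ! i)" by simp
  qed
  then show False using ac by simp
qed



definition FFset :: "'v set \<Rightarrow> ('v \<times> 'v) set \<Rightarrow> 'v set \<Rightarrow> ('v \<times> 'v) set set" where
  "FFset V E R = {F. F \<subseteq> E \<and> pstruct V R F \<and> reach_all V R F}"

lemma forest_iff:
  assumes fin: "finite V" and EV: "E \<subseteq> V \<times> V" and RV: "R \<subseteq> V"
  shows "(directed_forest V E F \<and> forest_roots V F = R) \<longleftrightarrow> F \<in> FFset V E R"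
proof
  assume a: "directed_forest V E F \<and> forest_roots V F = R"
  then have FE: "F \<subseteq> E" and ac: "\<not> has_undirected_cycle F" and indeg: "\<forall>v\<in>V. card {u. (u, v) \<in> F} \<le> 1"
    and rt: "forest_roots V F = R" unfolding directed_forest_def by auto
  have ps: "pstruct V R F" unfolding pstruct_def
  proof (intro conjI ballI allI)
    show "F \<subseteq> V \<times> V" using FE EV by blast
    fix v assume v: "v \<in> V - R"
    then obtain u where u: "(u, v) \<in> F" using rt unfolding forest_roots_def by blast
    have finS: "finite {u. (u, v) \<in> F}"
      by (rule finite_subset[of _ V]) (use FE EV fin in auto)
    have "card {u. (u, v) \<in> F} \<le> Suc 0" using indeg v by simp
    then have "\<forall>a\<in>{u. (u, v) \<in> F}. \<forall>b\<in>{u. (u, v) \<in> F}. a = b"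
      using card_le_Suc0_iff_eq[OF finS] by blast
    then show "\<exists>!u. (u, v) \<in> F" using u by blast
  next
    fix v u assume "v \<in> R"
    then show "(u, v) \<notin> F" using rt unfolding forest_roots_def by blast
  qed
  have "reach_all V R F" unfolding reach_all_def using reach_from_acyclic[OF ps fin ac] by blast
  then show "F \<in> FFset V E R" using ps FE unfolding FFset_def by blast
next
  assume "F \<in> FFset V E R"
  then have FE: "F \<subseteq> E" and ps: "pstruct V R F" and ra: "reach_all V R F" unfolding FFset_def by auto
  have ac: "\<not> has_undirected_cycle F"
    by (rule height_acyclic[where h = "dep R F"]) (use dep_edge[OF ps ra] par_eq[OF ps] in metis)+
  have indeg: "\<forall>v\<in>V. card {u. (u, v) \<in> F} \<le> 1"
  proof
    fix v assume "v \<in> V"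
    have finS: "finite {u. (u, v) \<in> F}"
      by (rule finite_subset[of _ V]) (use FE EV fin in auto)
    have "\<forall>a\<in>{u. (u, v) \<in> F}. \<forall>b\<in>{u. (u, v) \<in> F}. a = b" using par_eq[OF ps] by auto
    then show "card {u. (u, v) \<in> F} \<le> 1" using card_le_Suc0_iff_eq[OF finS] by simp
  qed
  have rt: "forest_roots V F = R"
  proof -
    have "\<And>v. v \<in> V \<Longrightarrow> v \<notin> R \<Longrightarrow> \<exists>u. (u, v) \<in> F" using par_in[OF ps] by blast
    moreover have "\<And>v u. v \<in> R \<Longrightarrow> (u, v) \<notin> F" using ps unfolding pstruct_def by blast
    ultimately show ?thesis unfolding forest_roots_def using RV by blast
  qed
  show "directed_forest V E F \<and> forest_roots V F = R"
    unfolding directed_forest_def using FE ac indeg rt by blast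
qed

lemma facets_eq:
  assumes fin: "finite V" and EV: "E \<subseteq> V \<times> V" and RV: "R \<subseteq> V"
  shows "facets (DT_R V E R) = FFset V E R"
proof
  show "facets (DT_R V E R) \<subseteq> FFset V E R"
  proof
    fix F assume "F \<in> facets (DT_R V E R)"
    then have F: "F \<in> DT_R V E R" and mx: "\<And>G. G \<in> DT_R V E R \<Longrightarrow> F \<subseteq> G \<Longrightarrow> G = F"
      unfolding facets_def by auto
    then obtain F' where F': "directed_forest V E F'" "forest_roots V F' = R" "F \<subseteq> F'"
      unfolding DT_R_def by blast
    then have "F' \<in> DT_R V E R" unfolding DT_R_def by blast
    then have "F' = F" using mx F' by blast
    then show "F \<in> FFset V E R" using F' forest_iff[OF assms] by blast
  qed
next
  show "FFset V E R \<subseteq> facets (DT_R V E R)"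
  proof
    fix F assume FF: "F \<in> FFset V E R"
    then have ps: "pstruct V R F" unfolding FFset_def by blast
    have "F \<in> DT_R V E R" using FF forest_iff[OF assms] unfolding DT_R_def by blast
    moreover have "\<And>G. G \<in> DT_R V E R \<Longrightarrow> F \<subseteq> G \<Longrightarrow> G = F"
    proof -
      fix G assume G: "G \<in> DT_R V E R" "F \<subseteq> G"
      then obtain F' where F': "directed_forest V E F'" "forest_roots V F' = R" "G \<subseteq> F'"
        unfolding DT_R_def by blast
      then have ps': "pstruct V R F'" using forest_iff[OF assms] unfolding FFset_def by blast
      have "F' \<subseteq> F"
      proof
        fix e assume e: "e \<in> F'"
        obtain u v where uv: "e = (u, v)" by (cases e)
        have v: "v \<in> V" "v \<notin> R" using not_in_R[OF ps'] e uv by auto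
        have "(par F v, v) \<in> F" using par_in[OF ps v] .
        then have "(par F v, v) \<in> F'" using G F' by blast
        then have "par F v = u" using par_eq[OF ps'] e uv by (metis par_eq[OF ps'])
        then show "e \<in> F" using \<open>(par F v, v) \<in> F\<close> uv by simp
      qed
      then show "G = F" using G F' by blast
    qed
    ultimately show "F \<in> facets (DT_R V E R)" unfolding facets_def by blast
  qed
qed



lemma swap:
  assumes ps: "pstruct V R F" and ra: "reach_all V R F" and FE: "F \<subseteq> E"
    and x: "x \<in> V" "x \<notin> R" and w: "w \<in> V" and wE: "(w, x) \<in> E"
    and dw: "dep R F w < dep R F x"
  defines "F' \<equiv> insert (w, x) (F - {(par F x, x)})"
  shows "F' \<in> FFset V E R" "\<forall>y\<in>V. dep R F' y \<le> dep R F y" "dep R F' x \<le> Suc (dep R F w)"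
proof -
  have char: "\<And>u v. (u, v) \<in> F' \<longleftrightarrow> v \<in> V \<and> v \<notin> R \<and> u = (if v = x then w else par F v)"
  proof -
    fix u v
    show "(u, v) \<in> F' \<longleftrightarrow> v \<in> V \<and> v \<notin> R \<and> u = (if v = x then w else par F v)"
    proof
      assume "(u, v) \<in> F'"
      then have "(u, v) = (w, x) \<or> ((u, v) \<in> F \<and> (u, v) \<noteq> (par F x, x))" unfolding F'_def by blast
      then show "v \<in> V \<and> v \<notin> R \<and> u = (if v = x then w else par F v)"
      proof
        assume "(u, v) = (w, x)" then show ?thesis using x by simp
      next
        assume a: "(u, v) \<in> F \<and> (u, v) \<noteq> (par F x, x)"
        then have "par F v = u" "v \<in> V" "v \<notin> R" using par_eq[OF ps] not_in_R[OF ps] by blast+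
        then show ?thesis using a by auto
      qed
    next
      assume a: "v \<in> V \<and> v \<notin> R \<and> u = (if v = x then w else par F v)"
      show "(u, v) \<in> F'"
      proof (cases "v = x")
        case True then show ?thesis using a unfolding F'_def by simp
      next
        case False then show ?thesis using a par_in[OF ps] unfolding F'_def by simp
      qed
    qed
  qed
  have ps': "pstruct V R F'" unfolding pstruct_def
  proof (intro conjI ballI allI)
    show "F' \<subseteq> V \<times> V"
    proof
      fix e assume "e \<in> F'"
      then obtain u v where uv: "e = (u, v)" "(u, v) \<in> F'" by (cases e) auto
      then have "v \<in> V" "v \<notin> R" "u = (if v = x then w else par F v)" using char by blast+
      then show "e \<in> V \<times> V" using uv w par_V[OF ps] by auto
    qed
  next
    fix v assume "v \<in> V - R"
    then show "\<exists>!u. (u, v) \<in> F'" using char by auto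
  next
    fix v u assume "v \<in> R" then show "(u, v) \<notin> F'" using char by auto
  qed
  have par': "\<And>y. y \<in> V \<Longrightarrow> y \<notin> R \<Longrightarrow> par F' y = (if y = x then w else par F y)"
    using par_eq[OF ps'] char by blast
  have dlt: "\<And>y. y \<in> V \<Longrightarrow> y \<notin> R \<Longrightarrow> dep R F (par F' y) < dep R F y \<and> par F' y \<in> V"
  proof -
    fix y assume y: "y \<in> V" "y \<notin> R"
    show "dep R F (par F' y) < dep R F y \<and> par F' y \<in> V"
    proof (cases "y = x")
      case True then show ?thesis using par' y dw w by simp
    next
      case False then show ?thesis using par' y dep_step[OF ps ra y] par_V[OF ps y] by simp
    qed
  qed
  have reach': "\<And>n y. y \<in> V \<Longrightarrow> dep R F y = n \<Longrightarrow> \<exists>m. (par F' ^^ m) y \<in> R"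
  proof -
    fix n show "\<And>y. y \<in> V \<Longrightarrow> dep R F y = n \<Longrightarrow> \<exists>m. (par F' ^^ m) y \<in> R"
    proof (induction n rule: less_induct)
      case (less n y)
      show ?case
      proof (cases "y \<in> R")
        case True then show ?thesis by (intro exI[of _ 0]) simp
      next
        case False
        then obtain m where "(par F' ^^ m) (par F' y) \<in> R" using less dlt by blast
        then have "(par F' ^^ Suc m) y \<in> R" by (simp add: funpow_Suc_right del: funpow.simps)
        then show ?thesis by blast
      qed
    qed
  qed
  have ra': "reach_all V R F'" unfolding reach_all_def using reach' by blast
  have F'E: "F' \<subseteq> E" unfolding F'_def using FE wE by blast
  show "F' \<in> FFset V E R" unfolding FFset_def using F'E ps' ra' by blast
  have dle: "\<And>n y. y \<in> V \<Longrightarrow> dep R F y = n \<Longrightarrow> dep R F' y \<le> dep R F y"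
  proof -
    fix n show "\<And>y. y \<in> V \<Longrightarrow> dep R F y = n \<Longrightarrow> dep R F' y \<le> dep R F y"
    proof (induction n rule: less_induct)
      case (less n y)
      show ?case
      proof (cases "y \<in> R")
        case True then show ?thesis by (simp add: dep_R)
      next
        case False
        have "dep R F' y = Suc (dep R F' (par F' y))" using dep_step[OF ps' ra' less(2) False] .
        also have "\<dots> \<le> Suc (dep R F (par F' y))" using less dlt[OF less(2) False] by simp
        also have "\<dots> \<le> dep R F y" using dlt[OF less(2) False] by simp
        finally show ?thesis .
      qed
    qed
  qed
  then show "\<forall>y\<in>V. dep R F' y \<le> dep R F y" by blast
  have "dep R F' x = Suc (dep R F' w)" using dep_step[OF ps' ra' x] par'[OF x] by simp
  then show "dep R F' x \<le> Suc (dep R F w)" using dle[OF w refl] by simp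
qed



lemma geo2: "(\<Sum>c<m. (2::nat) ^ c) < 2 ^ m"
  by (induction m) auto

lemma pow_sum_lt:
  fixes X Y :: "nat set"
  assumes "finite X" "finite Y" "m \<in> X" "m \<notin> Y" "\<forall>c\<in>Y - X. c < m"
  shows "(\<Sum>c\<in>Y. (2::nat) ^ c) < (\<Sum>c\<in>X. 2 ^ c)"
proof -
  have "(\<Sum>c\<in>Y. (2::nat) ^ c) = (\<Sum>c\<in>Y \<inter> X. 2 ^ c) + (\<Sum>c\<in>Y - X. 2 ^ c)"
    using assms(2) by (rule sum.Int_Diff)
  also have "(\<Sum>c\<in>Y - X. (2::nat) ^ c) \<le> (\<Sum>c<m. 2 ^ c)"
    by (rule sum_mono2) (use assms in auto)
  also have "(\<Sum>c<m. (2::nat) ^ c) < 2 ^ m" by (rule geo2)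
  also have "(2::nat) ^ m \<le> (\<Sum>c\<in>X - Y. 2 ^ c)"
    by (rule member_le_sum) (use assms in auto)
  finally have "(\<Sum>c\<in>Y. (2::nat) ^ c) < (\<Sum>c\<in>Y \<inter> X. 2 ^ c) + (\<Sum>c\<in>X - Y. 2 ^ c)" by simp
  also have "\<dots> = (\<Sum>c\<in>X. 2 ^ c)"
    using sum.Int_Diff[OF assms(1), of "\<lambda>c. (2::nat) ^ c" Y] by (simp add: Int_commute)
  finally show ?thesis .
qed

definition bin :: "('a \<Rightarrow> nat) \<Rightarrow> 'a set \<Rightarrow> nat" where
  "bin code F = (\<Sum>e\<in>F. 2 ^ code e)"

lemma bin_reindex:
  assumes "inj_on code U" "F \<subseteq> U"
  shows "bin code F = (\<Sum>c\<in>code ` F. 2 ^ c)"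
  unfolding bin_def using sum.reindex[of code F "\<lambda>c. (2::nat) ^ c"] inj_on_subset[OF assms]
  by simp

lemma bin_lt:
  assumes "inj_on code U" "code ` U \<subseteq> {..<N}" "F \<subseteq> U"
  shows "bin code F < 2 ^ N"
proof -
  have "bin code F = (\<Sum>c\<in>code ` F. 2 ^ c)" using bin_reindex[OF assms(1,3)] .
  also have "\<dots> \<le> (\<Sum>c<N. 2 ^ c)" by (rule sum_mono2) (use assms in auto)
  also have "\<dots> < 2 ^ N" by (rule geo2)
  finally show ?thesis .
qed

lemma bin_cmp:
  assumes inj: "inj_on code U" and fin: "finite U" and AU: "A \<subseteq> U" and BU: "B \<subseteq> U"
    and e0: "e0 \<in> A - B" and mx: "\<forall>e\<in>(A - B) \<union> (B - A). code e \<le> code e0"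
  shows "bin code B < bin code A"
proof -
  have "(\<Sum>c\<in>code ` B. (2::nat) ^ c) < (\<Sum>c\<in>code ` A. 2 ^ c)"
  proof (rule pow_sum_lt)
    show "finite (code ` A)" "finite (code ` B)" using fin AU BU finite_subset by blast+
    show "code e0 \<in> code ` A" using e0 by blast
    show "code e0 \<notin> code ` B"
    proof
      assume "code e0 \<in> code ` B"
      then obtain e where "code e0 = code e" "e \<in> B" by (rule imageE)
      then have "e = e0" using inj e0 AU BU unfolding inj_on_def by blast
      then show False using e0 \<open>e \<in> B\<close> by blast
    qed
    show "\<forall>c\<in>code ` B - code ` A. c < code e0"
    proof
      fix c assume "c \<in> code ` B - code ` A"
      then obtain e where e: "e \<in> B" "e \<notin> A" "c = code e" by blast
      then have "code e \<le> code e0" using mx by blast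
      moreover have "code e \<noteq> code e0"
      proof
        assume "code e = code e0"
        then have "e = e0" using inj e0 e AU BU unfolding inj_on_def by blast
        then show False using e e0 by blast
      qed
      ultimately show "c < code e0" using e by simp
    qed
  qed
  then show ?thesis using bin_reindex[OF inj AU] bin_reindex[OF inj BU] by simp
qed

lemma maxsd:
  fixes code :: "'a \<Rightarrow> nat"
  assumes "finite U" "A \<subseteq> U" "B \<subseteq> U" "A \<noteq> B"
  shows "\<exists>e0\<in>(A - B) \<union> (B - A). \<forall>e\<in>(A - B) \<union> (B - A). code e \<le> code e0"
proof -
  define S where "S = (A - B) \<union> (B - A)"
  have "S \<subseteq> U" using assms S_def by blast
  then have fS1: "finite S" using finite_subset assms(1) by blast
  have "S \<noteq> {}" using assms(4) S_def by blast
  note fS = fS1 this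
  have "Max (code ` S) \<in> code ` S" using fS by simp
  then obtain e0 where m: "Max (code ` S) = code e0" "e0 \<in> S" by (rule imageE)
  have "\<forall>e\<in>S. code e \<le> code e0" using m fS(1) by (metis Max_ge finite_imageI imageI)
  then show ?thesis using m(2) unfolding S_def by blast
qed

lemma keycmp:
  fixes x y a b M :: nat
  assumes "a < M" "b < M"
  shows "(x * M + a < y * M + b) \<longleftrightarrow> (x < y \<or> (x = y \<and> a < b))"
proof -
  have lt: "\<And>x y a b. a < M \<Longrightarrow> x < y \<Longrightarrow> x * M + a < y * M + b"
  proof -
    fix x y a b :: nat assume "a < M" "x < y"
    then have "Suc x * M \<le> y * M" by (intro mult_le_mono1) simp
    then show "x * M + a < y * M + b" using \<open>a < M\<close> by simp
  qed
  show ?thesis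
  proof
    assume h: "x * M + a < y * M + b"
    show "x < y \<or> (x = y \<and> a < b)"
    proof (cases "x < y")
      case False
      then have "y < x \<or> y = x" by auto
      then show ?thesis
      proof
        assume "y < x" then have "y * M + b < x * M + a" using lt assms by blast
        then show ?thesis using h by simp
      next
        assume "y = x" then show ?thesis using h by simp
      qed
    qed simp
  next
    assume "x < y \<or> (x = y \<and> a < b)"
    then show "x * M + a < y * M + b" using lt assms by auto
  qed
qed

lemma finish:
  fixes key :: "('v \<times> 'v) set \<Rightarrow> nat"
  assumes Fk: "Fk \<in> FFset V E R" and Fi: "Fi \<in> FFset V E R"
    and x: "x \<in> V" "x \<notin> R" and wx: "(w, x) \<in> Fi" and ni: "(par Fk x, x) \<notin> Fi"
    and dw: "dep R Fk w < dep R Fk x"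
    and kl: "key (insert (w, x) (Fk - {(par Fk x, x)})) < key Fk"
  shows "\<exists>G\<in>FFset V E R. key G < key Fk \<and> (\<exists>e\<in>Fk. Fi \<inter> Fk \<subseteq> G \<inter> Fk \<and> G \<inter> Fk = Fk - {e})"
proof -
  have psk: "pstruct V R Fk" and rak: "reach_all V R Fk" and FkE: "Fk \<subseteq> E"
    and psi: "pstruct V R Fi" and FiE: "Fi \<subseteq> E"
    using Fk Fi unfolding FFset_def by auto
  have w: "w \<in> V" using not_in_R(3)[OF psi wx] .
  have wE: "(w, x) \<in> E" using wx FiE by blast
  define e where "e = (par Fk x, x)"
  define G where "G = insert (w, x) (Fk - {e})"
  have GF: "G \<in> FFset V E R" using swap(1)[OF psk rak FkE x w wE dw] G_def e_def by simp
  have eFk: "e \<in> Fk" using par_in[OF psk x] e_def by simp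
  have "w \<noteq> par Fk x" using wx ni by auto
  then have "(w, x) \<notin> Fk" using par_eq[OF psk] by blast
  then have "G \<inter> Fk = Fk - {e}" using G_def by blast
  moreover have "Fi \<inter> Fk \<subseteq> G \<inter> Fk" using ni e_def G_def by blast
  moreover have "key G < key Fk" using kl G_def e_def by simp
  ultimately show ?thesis using GF eFk by blast
qed



theorem theorem2p9:
  fixes V :: "'v set" and E :: "('v \<times> 'v) set" and R :: "'v set"
  assumes "finite V" and "E \<subseteq> V \<times> V" and "R \<subseteq> V"
  shows "shellable (DT_R V E R)"
proof -
  note fin = assms(1) and EV = assms(2) and RV = assms(3)
  define U where "U = V \<times> V"
  have finU: "finite U" using fin U_def by simp
  obtain code :: "'v \<times> 'v \<Rightarrow> nat" and N where cN: "code ` U = {i. i < N}" and inj: "inj_on code U"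
    using finite_imp_inj_to_nat_seg[OF finU] by blast
  have cU: "code ` U \<subseteq> {..<N}" using cN by auto
  define FF where "FF = FFset V E R"
  have FFU: "\<And>F. F \<in> FF \<Longrightarrow> F \<subseteq> U" using EV U_def unfolding FF_def FFset_def by blast
  define SD where "SD = (\<lambda>F. \<Sum>y\<in>V. dep R F y)"
  define key where "key = (\<lambda>F. SD F * 2 ^ N + bin code F)"
  have blt: "\<And>F. F \<in> FF \<Longrightarrow> bin code F < 2 ^ N" using bin_lt[OF inj cU] FFU by blast
  have kc: "\<And>F G. F \<in> FF \<Longrightarrow> G \<in> FF \<Longrightarrow> key F < key G \<longleftrightarrow> (SD F < SD G \<or> (SD F = SD G \<and> bin code F < bin code G))"
    unfolding key_def using keycmp blt by blast
  have binne: "\<And>F G. F \<in> FF \<Longrightarrow> G \<in> FF \<Longrightarrow> F \<noteq> G \<Longrightarrow> bin code F \<noteq> bin code G"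
  proof -
    fix F G assume FG: "F \<in> FF" "G \<in> FF" "F \<noteq> G"
    obtain e0 where e0: "e0 \<in> (F - G) \<union> (G - F)" "\<forall>e\<in>(F - G) \<union> (G - F). code e \<le> code e0"
      using maxsd[OF finU FFU[OF FG(1)] FFU[OF FG(2)] FG(3), of code] by blast
    show "bin code F \<noteq> bin code G"
    proof (cases "e0 \<in> F - G")
      case True
      then show ?thesis using bin_cmp[OF inj finU FFU[OF FG(1)] FFU[OF FG(2)] True] e0 by simp
    next
      case False
      then have "e0 \<in> G - F" using e0 by blast
      moreover have "\<forall>e\<in>(G - F) \<union> (F - G). code e \<le> code e0" using e0(2) by blast
      ultimately have "bin code F < bin code G" using bin_cmp[OF inj finU FFU[OF FG(2)] FFU[OF FG(1)]] by blast
      then show ?thesis by simp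
    qed
  qed
  have finFF: "finite FF"
  proof -
    have "FF \<subseteq> Pow E" unfolding FF_def FFset_def by blast
    moreover have "finite E" using EV fin finite_subset by blast
    ultimately show ?thesis using finite_subset by blast
  qed
  have injk: "inj_on key FF"
  proof (rule inj_onI)
    fix F G assume FG: "F \<in> FF" "G \<in> FF" "key F = key G"
    then have "\<not> key F < key G" "\<not> key G < key F" by auto
    then have "bin code F = bin code G" using kc[OF FG(1,2)] kc[OF FG(2,1)] by auto
    then show "F = G" using binne FG by blast
  qed
  have fe: "facets (DT_R V E R) = FF" using facets_eq[OF assms] FF_def by simp
  show ?thesis
  proof (rule shellable_from_key[where key = key])
    show "finite (facets (DT_R V E R))" using finFF fe by simp
    show "inj_on key (facets (DT_R V E R))" using injk fe by simp
    fix Fk Fi assume Fk0: "Fk \<in> facets (DT_R V E R)" and Fi0: "Fi \<in> facets (DT_R V E R)"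
      and kl: "key Fi < key Fk"
    have Fk: "Fk \<in> FF" and Fi: "Fi \<in> FF" using Fk0 Fi0 fe by auto
    have psk: "pstruct V R Fk" and rak: "reach_all V R Fk" and FkE: "Fk \<subseteq> E"
      and psi: "pstruct V R Fi" and rai: "reach_all V R Fi" and FiE: "Fi \<subseteq> E"
      using Fk Fi unfolding FF_def FFset_def by auto
    define dk where "dk = dep R Fk"
    define di where "di = dep R Fi"
    have "\<exists>x w. x \<in> V \<and> x \<notin> R \<and> (w, x) \<in> Fi \<and> (par Fk x, x) \<notin> Fi \<and> dk w < dk x \<and>
             key (insert (w, x) (Fk - {(par Fk x, x)})) < key Fk"
    proof (cases "\<exists>y\<in>V. di y < dk y")
      case True
      then obtain y where "y \<in> V \<and> di y < dk y" by blast
      then obtain x where x: "x \<in> V" "di x < dk x" and xmin: "\<And>z. z \<in> V \<and> di z < dk z \<Longrightarrow> di x \<le> di z"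
        using ex_has_least_nat[of "\<lambda>y. y \<in> V \<and> di y < dk y" y di] by blast
      have xR: "x \<notin> R" using x dep_R dk_def by fastforce
      define w where "w = par Fi x"
      have wx: "(w, x) \<in> Fi" using par_in[OF psi x(1) xR] w_def by simp
      have wV: "w \<in> V" using par_V[OF psi x(1) xR] w_def by simp
      have diw: "di x = Suc (di w)" using dep_step[OF psi rai x(1) xR] w_def di_def by simp
      have "\<not> di w < dk w" using xmin[of w] wV diw by auto
      then have lt: "Suc (dk w) < dk x" using diw x by simp
      have dkx: "dk x = Suc (dk (par Fk x))" using dep_step[OF psk rak x(1) xR] dk_def by simp
      have ni: "(par Fk x, x) \<notin> Fi"
      proof
        assume "(par Fk x, x) \<in> Fi"
        then have "par Fi x = par Fk x" using par_eq[OF psi] by blast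
        then show False using lt dkx w_def by simp
      qed
      define G where "G = insert (w, x) (Fk - {(par Fk x, x)})"
      have wE: "(w, x) \<in> E" using wx FiE by blast
      have dwx: "dep R Fk w < dep R Fk x" using lt dk_def by simp
      note sw = swap[OF psk rak FkE x(1) xR wV wE dwx]
      have GF: "G \<in> FF" using sw(1) G_def FF_def by simp
      have "SD G < SD Fk" unfolding SD_def
      proof (rule sum_strict_mono_ex1)
        show "finite V" by (rule fin)
        show "\<forall>y\<in>V. dep R G y \<le> dep R Fk y" using sw(2) G_def by simp
        show "\<exists>y\<in>V. dep R G y < dep R Fk y"
          using sw(3) G_def lt dk_def x(1) by (intro bexI[of _ x]) auto
      qed
      then have "key G < key Fk" using kc[OF GF Fk] by simp
      then show ?thesis using x(1) xR wx ni dwx G_def dk_def by blast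
    next
      case False
      then have le: "\<forall>y\<in>V. dk y \<le> di y" by auto
      have "SD Fk \<le> SD Fi" unfolding SD_def using le dk_def di_def by (simp add: sum_mono)
      then have sdeq: "SD Fi = SD Fk" and bl: "bin code Fi < bin code Fk" using kc[OF Fi Fk] kl by auto
      have eqd: "\<forall>y\<in>V. dk y = di y"
      proof (rule ccontr)
        assume "\<not> (\<forall>y\<in>V. dk y = di y)"
        then have "\<exists>y\<in>V. dk y < di y" using le by force
        then have "SD Fk < SD Fi" unfolding SD_def dk_def di_def
          using sum_strict_mono_ex1[OF fin] le dk_def di_def by blast
        then show False using sdeq by simp
      qed
      have neq: "Fi \<noteq> Fk" using bl by blast
      obtain e0 where e0: "e0 \<in> (Fk - Fi) \<union> (Fi - Fk)" "\<forall>e\<in>(Fk - Fi) \<union> (Fi - Fk). code e \<le> code e0"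
        using maxsd[OF finU FFU[OF Fk] FFU[OF Fi] neq[symmetric], of code] by blast
      have e0k: "e0 \<in> Fk - Fi"
      proof (rule ccontr)
        assume "e0 \<notin> Fk - Fi"
        then have "e0 \<in> Fi - Fk" using e0 by blast
        moreover have "\<forall>e\<in>(Fi - Fk) \<union> (Fk - Fi). code e \<le> code e0" using e0(2) by blast
        ultimately have "bin code Fk < bin code Fi"
          using bin_cmp[OF inj finU FFU[OF Fi] FFU[OF Fk]] by blast
        then show False using bl by simp
      qed
      obtain u x where ux: "e0 = (u, x)" by (cases e0)
      have xV: "x \<in> V" and xR: "x \<notin> R" using not_in_R[OF psk] e0k ux by auto
      have u: "par Fk x = u" using par_eq[OF psk] e0k ux by blast
      define w where "w = par Fi x"
      have wx: "(w, x) \<in> Fi" using par_in[OF psi xV xR] w_def by simp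
      have wV: "w \<in> V" using par_V[OF psi xV xR] w_def by simp
      have ni: "(par Fk x, x) \<notin> Fi" using e0k ux u by simp
      have wu: "w \<noteq> u" using wx ni u by auto
      have wnk: "(w, x) \<notin> Fk" using par_eq[OF psk] u wu by blast
      have "di x = Suc (di w)" using dep_step[OF psi rai xV xR] w_def di_def by simp
      then have dwx: "dep R Fk w < dep R Fk x" using eqd wV xV dk_def by simp
      have wE: "(w, x) \<in> E" using wx FiE by blast
      define G where "G = insert (w, x) (Fk - {(par Fk x, x)})"
      note sw = swap[OF psk rak FkE xV xR wV wE dwx]
      have GF: "G \<in> FF" using sw(1) G_def FF_def by simp
      have sdle: "SD G \<le> SD Fk" unfolding SD_def using sw(2) G_def by (simp add: sum_mono)
      have "bin code G < bin code Fk"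
      proof (rule bin_cmp[OF inj finU FFU[OF Fk] FFU[OF GF]])
        show "e0 \<in> Fk - G" using e0k ux u wu G_def by auto
        have "(w, x) \<in> (Fk - Fi) \<union> (Fi - Fk)" using wx wnk by blast
        then have "code (w, x) \<le> code e0" using e0 by blast
        moreover have "(Fk - G) \<union> (G - Fk) \<subseteq> {e0, (w, x)}" using G_def ux u by auto
        ultimately show "\<forall>e\<in>(Fk - G) \<union> (G - Fk). code e \<le> code e0" by auto
      qed
      then have "key G < key Fk" using kc[OF GF Fk] sdle by auto
      then show ?thesis using xV xR wx ni dwx G_def dk_def by blast
    qed
    then obtain x w where xw: "x \<in> V" "x \<notin> R" "(w, x) \<in> Fi" "(par Fk x, x) \<notin> Fi" "dk w < dk x"
      "key (insert (w, x) (Fk - {(par Fk x, x)})) < key Fk" by blast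
    have "\<exists>G\<in>FFset V E R. key G < key Fk \<and> (\<exists>e\<in>Fk. Fi \<inter> Fk \<subseteq> G \<inter> Fk \<and> G \<inter> Fk = Fk - {e})"
      by (rule finish[OF _ _ xw(1,2,3,4)]) (use Fk Fi xw(5,6) FF_def dk_def in auto)
    then show "\<exists>G\<in>facets (DT_R V E R). key G < key Fk \<and> (\<exists>e\<in>Fk. Fi \<inter> Fk \<subseteq> G \<inter> Fk \<and> G \<inter> Fk = Fk - {e})"
      using fe FF_def by simp
  qed
qed

end
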